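(* Let $\approx$ be an equinumerosity on $\mathbb W$. For finite sets $A,B\in\mathbb W$ we have $A\approx B$ if and only if $|A|=|B|$. Moreover, if $X\in\mathbb W$ is infinite and $A\in\mathbb W$ is finite, then $X\succ A$.
   Context: Let $\mathbb N=\{0,1,2,\dots\}$. Let $\mathbb{W}$ be the family of finitary point sets: sets $A\subseteq\bigcup_{k\ge1}\mathbb N^k$ of finite tuples of natural numbers (tuples of different lengths allowed) such that for every $n\in\mathbb N$ there is $h$ with $A\cap\{0,\dots,n\}^k=\emptyset$ for all $k>h$. Cartesian products are identified with concatenations: $A\times B=\{(a_1,\dots,a_k,b_1,\dots,b_h):(a_1,\dots,a_k)\in A,\ (b_1,\dots,b_h)\in B\}$; $\{n\}$ denotes the set whose only element is the 1-tuple $(n)$. $A,B\in\mathbb W$ are multipliable if distinct pairs $(a,b)\in A\times B$ have distinct concatenations. Given an equivalence relation $\approx$ on $\mathbb W$, write $A\succ B$, equivalently $B\prec A$, if there exist $A',B'\in\mathbb W$ with $B'\subsetneq A'$, $A\approx A'$ and $B\approx B'$. An equinumerosity is an equivalence relation $\approx$ on $\mathbb W$ such that for all $A,B\in\mathbb W$: (AP) $A\approx B$ iff $A\setminus B\approx B\setminus A$; (ZP) exactly one of $A\approx B$, $A\succ B$, $A\prec B$ holds; (TP) if $T$ is injective on $A$ and $T(a)$ is a permutation of the coordinates of $a$ for every $a\in A$, then $A\approx T[A]$; (UP) $A\times\{n\}\approx A$ for all $n\in\mathbb N$; (PP) if $A,B$ are multipliable, $A',B'$ are multipliable, $A\approx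 A'$ and $B\approx B'$, then $A\times B\approx A'\times B'$. *)

theory Defs
  imports "HOL-Library.Multiset"
begin

text \<open>Tuples of natural numbers of length k \<ge> 1 are represented as nonempty lists.\<close>

definition finitary :: "nat list set \<Rightarrow> bool" where
  "finitary A \<longleftrightarrow> (\<forall>a\<in>A. a \<noteq> []) \<and>
     (\<forall>n::nat. \<exists>h::nat. \<forall>a\<in>A. set a \<subseteq> {0..n} \<longrightarrow> length a \<le> h)"

definition WW :: "nat list set set" where
  "WW = {A. finitary A}"

definition cprod :: "nat list set \<Rightarrow> nat list set \<Rightarrow> nat list set" where
  "cprod A B = {a @ b | a b. a \<in> A \<and> b \<in> B}"

definition sing :: "nat \<Rightarrow> nat list set" where
  "sing n = {[n]}"

definition multipliable :: "nat list set \<Rightarrow> nat list set \<Rightarrow> bool" where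
  "multipliable A B \<longleftrightarrow>
     (\<forall>a\<in>A. \<forall>a'\<in>A. \<forall>b\<in>B. \<forall>b'\<in>B. a @ b = a' @ b' \<longrightarrow> a = a' \<and> b = b')"

definition eq_greater :: "(nat list set \<Rightarrow> nat list set \<Rightarrow> bool)
    \<Rightarrow> nat list set \<Rightarrow> nat list set \<Rightarrow> bool" where
  "eq_greater R A B \<longleftrightarrow>
     (\<exists>A'\<in>WW. \<exists>B'\<in>WW. B' \<subset> A' \<and> R A A' \<and> R B B')"

definition equinumerosity :: "(nat list set \<Rightarrow> nat list set \<Rightarrow> bool) \<Rightarrow> bool" where
  "equinumerosity R \<longleftrightarrow>
     \<comment> \<open>equivalence relation on WW\<close>
     (\<forall>A\<in>WW. R A A) \<and>
     (\<forall>A\<in>WW. \<forall>B\<in>WW. R A B \<longrightarrow> R B A) \<and>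
     (\<forall>A\<in>WW. \<forall>B\<in>WW. \<forall>C\<in>WW. R A B \<longrightarrow> R B C \<longrightarrow> R A C) \<and>
     \<comment> \<open>(AP)\<close>
     (\<forall>A\<in>WW. \<forall>B\<in>WW. R A B \<longleftrightarrow> R (A - B) (B - A)) \<and>
     \<comment> \<open>(ZP)\<close>
     (\<forall>A\<in>WW. \<forall>B\<in>WW.
        (R A B \<and> \<not> eq_greater R A B \<and> \<not> eq_greater R B A) \<or>
        (\<not> R A B \<and> eq_greater R A B \<and> \<not> eq_greater R B A) \<or>
        (\<not> R A B \<and> \<not> eq_greater R A B \<and> eq_greater R B A)) \<and>
     \<comment> \<open>(TP)\<close>
     (\<forall>A\<in>WW. \<forall>T. inj_on T A \<longrightarrow> (\<forall>a\<in>A. mset (T a) = mset a) \<longrightarrow> R A (T ` A)) \<and>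
     \<comment> \<open>(UP)\<close>
     (\<forall>A\<in>WW. \<forall>n. R (cprod A (sing n)) A) \<and>
     \<comment> \<open>(PP)\<close>
     (\<forall>A\<in>WW. \<forall>B\<in>WW. \<forall>A'\<in>WW. \<forall>B'\<in>WW.
        multipliable A B \<longrightarrow> multipliable A' B' \<longrightarrow> R A A' \<longrightarrow> R B B' \<longrightarrow>
        R (cprod A B) (cprod A' B'))"

end

theory Submission
  imports Defs
begin

lemma WW_subset: "B \<in> WW \<Longrightarrow> A \<subseteq> B \<Longrightarrow> A \<in> WW"
proof -
  assume a: "B \<in> WW" "A \<subseteq> B"
  show ?thesis unfolding WW_def finitary_def mem_Collect_eq
  proof
    show "\<forall>a\<in>A. a \<noteq> []" using a unfolding WW_def finitary_def by blast
    show "\<forall>n. \<exists>h. \<forall>a\<in>A. set a \<subseteq> {0..n} \<longrightarrow> length a \<le> h"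
    proof
      fix n
      obtain h where "\<forall>a\<in>B. set a \<subseteq> {0..n} \<longrightarrow> length a \<le> h"
        using a unfolding WW_def finitary_def by blast
      then show "\<exists>h. \<forall>a\<in>A. set a \<subseteq> {0..n} \<longrightarrow> length a \<le> h" using a(2) by blast
    qed
  qed
qed

lemma WW_finite: "finite A \<Longrightarrow> (\<forall>a\<in>A. a \<noteq> []) \<Longrightarrow> A \<in> WW"
  unfolding WW_def finitary_def
  by (auto intro!: exI[of _ "Max (length ` A)"])

lemma WW_sing: "a \<noteq> [] \<Longrightarrow> {a} \<in> WW"
  by (rule WW_finite) auto

lemma WW_nonempty: "A \<in> WW \<Longrightarrow> a \<in> A \<Longrightarrow> a \<noteq> []"
  unfolding WW_def finitary_def by auto

locale eqn =
  fixes R :: "nat list set \<Rightarrow> nat list set \<Rightarrow> bool"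
  assumes E: "equinumerosity R"
begin

lemma EE: "(\<forall>A\<in>WW. R A A) \<and>
     (\<forall>A\<in>WW. \<forall>B\<in>WW. R A B \<longrightarrow> R B A) \<and>
     (\<forall>A\<in>WW. \<forall>B\<in>WW. \<forall>C\<in>WW. R A B \<longrightarrow> R B C \<longrightarrow> R A C) \<and>
     (\<forall>A\<in>WW. \<forall>B\<in>WW. R A B \<longleftrightarrow> R (A - B) (B - A)) \<and>
     (\<forall>A\<in>WW. \<forall>B\<in>WW.
        (R A B \<and> \<not> eq_greater R A B \<and> \<not> eq_greater R B A) \<or>
        (\<not> R A B \<and> eq_greater R A B \<and> \<not> eq_greater R B A) \<or>
        (\<not> R A B \<and> \<not> eq_greater R A B \<and> eq_greater R B A)) \<and>
     (\<forall>A\<in>WW. \<forall>T. inj_on T A \<longrightarrow> (\<forall>a\<in>A. mset (T a) = mset a) \<longrightarrow> R A (T ` A)) \<and>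
     (\<forall>A\<in>WW. \<forall>n. R (cprod A (sing n)) A)"
  using E unfolding equinumerosity_def by (elim conjE) (intro conjI)

lemma refl: "A \<in> WW \<Longrightarrow> R A A" using EE by (elim conjE) (rule bspec)
lemma sym: "A \<in> WW \<Longrightarrow> B \<in> WW \<Longrightarrow> R A B \<Longrightarrow> R B A"
proof -
  assume h: "A \<in> WW" "B \<in> WW" "R A B"
  have "\<forall>A\<in>WW. \<forall>B\<in>WW. R A B \<longrightarrow> R B A" using EE by (elim conjE)
  then show ?thesis using h by blast
qed
lemma trans: "A \<in> WW \<Longrightarrow> B \<in> WW \<Longrightarrow> C \<in> WW \<Longrightarrow> R A B \<Longrightarrow> R B C \<Longrightarrow> R A C"
proof -
  assume h: "A \<in> WW" "B \<in> WW" "C \<in> WW" "R A B" "R B C"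
  have "\<forall>A\<in>WW. \<forall>B\<in>WW. \<forall>C\<in>WW. R A B \<longrightarrow> R B C \<longrightarrow> R A C" using EE by (elim conjE)
  then show ?thesis using h by blast
qed
lemma AP: "A \<in> WW \<Longrightarrow> B \<in> WW \<Longrightarrow> R A B \<longleftrightarrow> R (A - B) (B - A)"
proof -
  assume h: "A \<in> WW" "B \<in> WW"
  have "\<forall>A\<in>WW. \<forall>B\<in>WW. R A B \<longleftrightarrow> R (A - B) (B - A)" using EE by (elim conjE)
  then show ?thesis using h by blast
qed
lemma ZP: "A \<in> WW \<Longrightarrow> B \<in> WW \<Longrightarrow> eq_greater R B A \<Longrightarrow> \<not> R A B"
proof -
  assume h: "A \<in> WW" "B \<in> WW" "eq_greater R B A"
  have "\<forall>A\<in>WW. \<forall>B\<in>WW.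
        (R A B \<and> \<not> eq_greater R A B \<and> \<not> eq_greater R B A) \<or>
        (\<not> R A B \<and> eq_greater R A B \<and> \<not> eq_greater R B A) \<or>
        (\<not> R A B \<and> \<not> eq_greater R A B \<and> eq_greater R B A)" using EE by (elim conjE)
  then have "(R A B \<and> \<not> eq_greater R A B \<and> \<not> eq_greater R B A) \<or>
        (\<not> R A B \<and> eq_greater R A B \<and> \<not> eq_greater R B A) \<or>
        (\<not> R A B \<and> \<not> eq_greater R A B \<and> eq_greater R B A)" using h by blast
  then show ?thesis using h(3) by blast
qed
lemma TP: "A \<in> WW \<Longrightarrow> inj_on T A \<Longrightarrow> (\<forall>a\<in>A. mset (T a) = mset a) \<Longrightarrow> R A (T ` A)"
proof -
  assume h: "A \<in> WW" "inj_on T A" "\<forall>a\<in>A. mset (T a) = mset a"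
  have "\<forall>A\<in>WW. \<forall>T. inj_on T A \<longrightarrow> (\<forall>a\<in>A. mset (T a) = mset a) \<longrightarrow> R A (T ` A)" using EE by (elim conjE)
  then show ?thesis using h by blast
qed
lemma UP: "A \<in> WW \<Longrightarrow> R (cprod A (sing n)) A"
proof -
  assume h: "A \<in> WW"
  have "\<forall>A\<in>WW. \<forall>n. R (cprod A (sing n)) A" using EE by (elim conjE)
  then show ?thesis using h by blast
qed

lemma snocR: "xs \<noteq> [] \<Longrightarrow> R {xs @ [n]} {xs}"
  using UP[of "{xs}" n] WW_sing[of xs] by (simp add: cprod_def sing_def)

lemma to_hd: "xs \<noteq> [] \<Longrightarrow> R {xs} {[hd xs]}"
proof (induction xs rule: rev_induct)
  case Nil then show ?case by simp
next
  case (snoc x xs)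
  show ?case
  proof (cases "xs = []")
    case True then show ?thesis using refl[OF WW_sing[of "[x]"]] by simp
  next
    case False
    then show ?thesis
      using trans[OF WW_sing WW_sing WW_sing, OF _ False, of "xs @ [x]" "[hd xs]"]
        snocR[OF False, of x] snoc.IH[OF False] by simp
  qed
qed

lemma nums: "R {[n]} {[m]}"
proof -
  have a: "R {[n,m]} {[n]}" using snocR[of "[n]" m] by simp
  have b: "R {[m,n]} {[m]}" using snocR[of "[m]" n] by simp
  have c: "R {[n,m]} {[m,n]}"
    using TP[OF WW_sing, of "[n,m]" "\<lambda>_. [m,n]"] by simp
  have d: "R {[n]} {[n,m]}" using sym[OF WW_sing WW_sing a] by simp
  have e: "R {[n]} {[m,n]}" using trans[OF WW_sing WW_sing WW_sing d c] by simp
  show ?thesis using trans[OF WW_sing WW_sing WW_sing e b] by simp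
qed

lemma singles: "a \<noteq> [] \<Longrightarrow> b \<noteq> [] \<Longrightarrow> R {a} {b}"
proof -
  assume a: "a \<noteq> []" and b: "b \<noteq> []"
  have 1: "R {a} {[hd b]}"
    using trans[OF WW_sing WW_sing WW_sing to_hd[OF a] nums[of "hd a" "hd b"]] a by simp
  have 2: "R {[hd b]} {b}" using sym[OF WW_sing WW_sing to_hd[OF b]] b by simp
  show ?thesis using trans[OF WW_sing WW_sing WW_sing 1 2] a b by simp
qed

lemma swap: "insert a C \<in> WW \<Longrightarrow> insert b C \<in> WW \<Longrightarrow> a \<notin> C \<Longrightarrow> b \<notin> C \<Longrightarrow> a \<noteq> b
  \<Longrightarrow> R (insert a C) (insert b C)"
proof -
  assume h: "insert a C \<in> WW" "insert b C \<in> WW" "a \<notin> C" "b \<notin> C" "a \<noteq> b"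
  have "insert a C - insert b C = {a}" "insert b C - insert a C = {b}" using h by auto
  moreover have "R {a} {b}" using singles WW_nonempty h by blast
  ultimately show ?thesis using AP[OF h(1,2)] by simp
qed

lemma card_eq: "\<forall>A B. A \<in> WW \<longrightarrow> B \<in> WW \<longrightarrow> finite A \<longrightarrow> finite B \<longrightarrow> card A = card B
   \<longrightarrow> card (A - B) = n \<longrightarrow> R A B"
proof (induction n)
  case 0
  show ?case
  proof (intro allI impI)
    fix A B assume h: "A \<in> WW" "B \<in> WW" "finite A" "finite B" "card A = card B" "card (A - B) = 0"
    then have "A \<subseteq> B" by auto
    then have "A = B" using h by (metis card_subset_eq)
    then show "R A B" using refl h by simp
  qed
next
  case (Suc n)
  show ?case
  proof (intro allI impI)
    fix A B assume h: "A \<in> WW" "B \<in> WW" "finite A" "finite B" "card A = card B" "card (A - B) = Suc n"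
    then obtain a where a: "a \<in> A" "a \<notin> B" by (metis Diff_iff card.empty ex_in_conv nat.distinct(1))
    have "\<not> B \<subseteq> A"
    proof
      assume "B \<subseteq> A" then have "B = A" using h by (metis card_subset_eq)
      then show False using a by simp
    qed
    then obtain b where b: "b \<in> B" "b \<notin> A" by auto
    define A' where "A' = insert b (A - {a})"
    have A'W: "A' \<in> WW" unfolding A'_def
      by (rule WW_finite) (use h b WW_nonempty in auto)
    have fA': "finite A'" using h A'_def by simp
    have cA': "card A' = card B" using h a b A'_def using card_gt_0_iff[of B] by (auto simp add: card.insert_remove)
    have "A' - B = (A - B) - {a}" using A'_def b by auto
    then have "card (A' - B) = n" using h a by simp
    then have 1: "R A' B" using Suc.IH A'W h fA' cA' by blast
    have 2: "R A A'"
      using swap[of a "A - {a}" b] A'W h(1) a b unfolding A'_def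
      by (metis Diff_iff insert_Diff singletonI)
    show "R A B" using trans[OF h(1) A'W h(2) 2 1] .
  qed
qed

lemma card_eqR: "A \<in> WW \<Longrightarrow> B \<in> WW \<Longrightarrow> finite A \<Longrightarrow> finite B \<Longrightarrow> card A = card B \<Longrightarrow> R A B"
  using card_eq by blast

lemma greater: "X \<in> WW \<Longrightarrow> A \<in> WW \<Longrightarrow> finite A \<Longrightarrow> B \<subseteq> X \<Longrightarrow> finite B \<Longrightarrow> card B = card A
   \<Longrightarrow> B \<noteq> X \<Longrightarrow> eq_greater R X A"
  unfolding eq_greater_def
  apply (rule bexI[of _ X], rule bexI[of _ B])
  using refl card_eqR[of A B] WW_subset[of X B] by auto

end

theorem proposition1p8:
  fixes R :: "nat list set \<Rightarrow> nat list set \<Rightarrow> bool"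
  assumes "equinumerosity R"
  shows "(\<forall>A\<in>WW. \<forall>B\<in>WW. finite A \<longrightarrow> finite B \<longrightarrow> (R A B \<longleftrightarrow> card A = card B))
    \<and> (\<forall>X\<in>WW. \<forall>A\<in>WW. infinite X \<longrightarrow> finite A \<longrightarrow> eq_greater R X A)"
proof -
  interpret eqn R using assms by unfold_locales
  have P1: "R A B \<longleftrightarrow> card A = card B" if h: "A \<in> WW" "B \<in> WW" "finite A" "finite B" for A B
  proof
    show "card A = card B \<Longrightarrow> R A B" using card_eqR[OF h] .
  next
    assume r: "R A B"
    show "card A = card B"
    proof (rule ccontr)
      assume ne: "card A \<noteq> card B"
      show False
      proof (cases "card A < card B")
        case True
        obtain C where C: "C \<subseteq> B" "card C = card A" using True
          by (metis less_imp_le obtain_subset_with_card_n)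
        have "C \<noteq> B" using C True by auto
        then have "eq_greater R B A" using greater[OF h(2) h(1) h(3) C(1) _ C(2)] h(4) C(1)
          by (meson finite_subset)
        then show False using ZP[OF h(1) h(2)] r by blast
      next
        case False
        then have lt: "card B < card A" using ne by simp
        obtain C where C: "C \<subseteq> A" "card C = card B" using lt
          by (metis less_imp_le obtain_subset_with_card_n)
        have "C \<noteq> A" using C lt by auto
        then have "eq_greater R A B" using greater[OF h(1) h(2) h(4) C(1) _ C(2)] h(3) C(1)
          by (meson finite_subset)
        moreover have "R B A" using sym[OF h(1) h(2) r] .
        ultimately show False using ZP[OF h(2) h(1)] by blast
      qed
    qed
  qed
  have P2: "eq_greater R X A" if h: "X \<in> WW" "A \<in> WW" "infinite X" "finite A" for X A
  proof -
    obtain C where C: "C \<subseteq> X" "finite C" "card C = card A"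
      using infinite_arbitrarily_large[OF h(3)] by blast
    show ?thesis using greater[OF h(1,2,4) C(1,2,3)] C h(3) by blast
  qed
  show ?thesis using P1 P2 by simp
qed

end
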